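(* In each of $\mathsf{G}(\mathbf{K}_D)$, $\mathsf{G}(\mathbf{KD}_D)$ and $\mathsf{G}(\mathbf{KT}_D)$, all logical rules other than the modal rules ($(D_K)$ in $\mathsf{G}(\mathbf{K}_D)$; $(D_K)$ and $(D_D)$ in $\mathsf{G}(\mathbf{KD}_D)$; $(D_K)$ and $(D_T)$ in $\mathsf{G}(\mathbf{KT}_D)$), i.e. the rules $(R\wedge),(L\wedge),(R\vee),(L\vee),(R\rightarrow),(L\rightarrow),(R\neg),(L\neg)$, are height-preserving invertible: whenever the conclusion of an instance of such a rule has a derivation of height $n$, each premise of that instance has a derivation of height at most $n$.
   Context: Language: fix a finite nonempty set $\mathsf{Agt}$ of agents and a countable set $\mathsf{Prop}$ of propositional variables; $\mathsf{Grp}$ is the set of nonempty subsets of $\mathsf{Agt}$. Formulas: $\alpha::=p\mid\bot\mid\alpha\wedge\alpha\mid\alpha\vee\alpha\mid\alpha\rightarrow\alpha\mid\neg\alpha\mid D_G\alpha$ ($p\in\mathsf{Prop}$, $G\in\mathsf{Grp}$). Outmost-boxed formula: one of the form $D_G\gamma$. Sequent calculi (sequents $\Gamma\Rightarrow\Delta$ are pairs of finite multisets; a derivation is a finite tree built from initial sequents by rules; its height is the maximum length of a branch from the end sequent to an initial sequent): $\mathsf{G}(\mathbf{K}_D)$ has initial sequents $\Gamma,p\Rightarrow p,\Delta$ and $\bot,\Gamma\Rightarrow\Delta$; rules $(R\wedge)$ from $\Gamma\Rightarrow\Delta,\alpha_1$ and $\Gamma\Rightarrow\Delta,\alpha_2$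 infer $\Gamma\Rightarrow\Delta,\alpha_1\wedge\alpha_2$; $(L\wedge)$ from $\alpha_1,\alpha_2,\Gamma\Rightarrow\Delta$ infer $\alpha_1\wedge\alpha_2,\Gamma\Rightarrow\Delta$; $(R\vee)$ from $\Gamma\Rightarrow\Delta,\alpha_1,\alpha_2$ infer $\Gamma\Rightarrow\Delta,\alpha_1\vee\alpha_2$; $(L\vee)$ from $\alpha_1,\Gamma\Rightarrow\Delta$ and $\alpha_2,\Gamma\Rightarrow\Delta$ infer $\alpha_1\vee\alpha_2,\Gamma\Rightarrow\Delta$; $(R\rightarrow)$ from $\alpha_1,\Gamma\Rightarrow\Delta,\alpha_2$ infer $\Gamma\Rightarrow\Delta,\alpha_1\rightarrow\alpha_2$; $(L\rightarrow)$ from $\Gamma\Rightarrow\Delta,\alpha_1$ and $\alpha_2,\Gamma\Rightarrow\Delta$ infer $\alpha_1\rightarrow\alpha_2,\Gamma\Rightarrow\Delta$; $(R\neg)$ from $\alpha,\Gamma\Rightarrow\Delta$ infer $\Gamma\Rightarrow\Delta,\neg\alpha$; $(L\neg)$ from $\Gamma\Rightarrow\Delta,\alpha$ infer $\neg\alpha,\Gamma\Rightarrow\Delta$; $(D_K)$: from $\alpha_1,\dots,\alpha_n\Rightarrow\beta$ ($n\ge0$) infer $\Sigma,D_{G_1}\alpha_1,\dots,D_{G_n}\alpha_n\Rightarrow D_G\beta,\Omega$ where all $G_i\subseteq G$, $\Sigma$ consists only of propositional variables, $\bot$, and $D_H\gamma$ with $H\not\subseteq G$, and $\Omega$ only of propositional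 variables, $\bot$, outmost-boxed formulas. $\mathsf{G}(\mathbf{KD}_D)$ adds $(D_D)$: from $\Gamma\Rightarrow$ with $\Gamma\neq\emptyset$ infer $\Sigma,D_{\{a\}}\Gamma\Rightarrow\Omega$, $\Sigma$ only propositional variables, $\bot$, $D_H\gamma$ with $H\neq\{a\}$; $\Omega$ only propositional variables, $\bot$, outmost-boxed formulas. $\mathsf{G}(\mathbf{KT}_D)$ adds to $\mathsf{G}(\mathbf{K}_D)$ $(D_T)$: from $D_G\alpha,\alpha,\Gamma\Rightarrow\Delta$ infer $D_G\alpha,\Gamma\Rightarrow\Delta$. *)

theory Defs
  imports Main "HOL-Library.Multiset" "HOL-Library.Countable"
begin

(* Agents: a finite (nonempty, as every HOL type) type 'a, Agt = UNIV.
   Propositional variables: a countable type 'p.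
   Groups: nonempty sets of agents (enforced by wf_fm). *)

datatype ('a, 'p) fm =
    Prop 'p
  | Bot
  | And "('a, 'p) fm" "('a, 'p) fm"
  | Or "('a, 'p) fm" "('a, 'p) fm"
  | Imp "('a, 'p) fm" "('a, 'p) fm"
  | Neg "('a, 'p) fm"
  | D "'a set" "('a, 'p) fm"

fun wf_fm :: "('a, 'p) fm \<Rightarrow> bool" where
  "wf_fm (Prop p) = True"
| "wf_fm Bot = True"
| "wf_fm (And a b) = (wf_fm a \<and> wf_fm b)"
| "wf_fm (Or a b) = (wf_fm a \<and> wf_fm b)"
| "wf_fm (Imp a b) = (wf_fm a \<and> wf_fm b)"
| "wf_fm (Neg a) = wf_fm a"
| "wf_fm (D G a) = (G \<noteq> {} \<and> wf_fm a)"

type_synonym ('a, 'p) sequent = "('a, 'p) fm multiset \<times> ('a, 'p) fm multiset"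

definition wf_seq :: "('a, 'p) sequent \<Rightarrow> bool" where
  "wf_seq s = ((\<forall>x\<in>#fst s. wf_fm x) \<and> (\<forall>x\<in>#snd s. wf_fm x))"

fun is_atom_or_bot :: "('a, 'p) fm \<Rightarrow> bool" where
  "is_atom_or_bot (Prop p) = True"
| "is_atom_or_bot Bot = True"
| "is_atom_or_bot _ = False"

fun is_boxed :: "('a, 'p) fm \<Rightarrow> bool" where
  "is_boxed (D G a) = True"
| "is_boxed _ = False"

datatype calculus = GK | GKD | GKT

inductive initial :: "('a, 'p) sequent \<Rightarrow> bool" where
  init_p: "initial (add_mset (Prop p) \<Gamma>, add_mset (Prop p) \<Delta>)"
| init_bot: "initial (add_mset Bot \<Gamma>, \<Delta>)"

inductive prop_rule :: "('a, 'p) sequent list \<Rightarrow> ('a, 'p) sequent \<Rightarrow> bool" where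
  RAnd: "prop_rule [(\<Gamma>, add_mset A \<Delta>), (\<Gamma>, add_mset B \<Delta>)] (\<Gamma>, add_mset (And A B) \<Delta>)"
| LAnd: "prop_rule [(add_mset A (add_mset B \<Gamma>), \<Delta>)] (add_mset (And A B) \<Gamma>, \<Delta>)"
| ROr: "prop_rule [(\<Gamma>, add_mset A (add_mset B \<Delta>))] (\<Gamma>, add_mset (Or A B) \<Delta>)"
| LOr: "prop_rule [(add_mset A \<Gamma>, \<Delta>), (add_mset B \<Gamma>, \<Delta>)] (add_mset (Or A B) \<Gamma>, \<Delta>)"
| RImp: "prop_rule [(add_mset A \<Gamma>, add_mset B \<Delta>)] (\<Gamma>, add_mset (Imp A B) \<Delta>)"
| LImp: "prop_rule [(\<Gamma>, add_mset A \<Delta>), (add_mset B \<Gamma>, \<Delta>)] (add_mset (Imp A B) \<Gamma>, \<Delta>)"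
| RNeg: "prop_rule [(add_mset A \<Gamma>, \<Delta>)] (\<Gamma>, add_mset (Neg A) \<Delta>)"
| LNeg: "prop_rule [(\<Gamma>, add_mset A \<Delta>)] (add_mset (Neg A) \<Gamma>, \<Delta>)"

inductive dk_rule :: "('a, 'p) sequent list \<Rightarrow> ('a, 'p) sequent \<Rightarrow> bool" where
  "\<lbrakk> length Gs = length As; \<forall>Gi\<in>set Gs. Gi \<subseteq> G;
     \<forall>x\<in>#\<Sigma>. is_atom_or_bot x \<or> (\<exists>H \<gamma>. x = D H \<gamma> \<and> \<not> H \<subseteq> G);
     \<forall>x\<in>#\<Omega>. is_atom_or_bot x \<or> is_boxed x \<rbrakk>
   \<Longrightarrow> dk_rule [(mset As, {#\<beta>#})]
         (\<Sigma> + mset (map2 D Gs As), add_mset (D G \<beta>) \<Omega>)"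

inductive dd_rule :: "('a, 'p) sequent list \<Rightarrow> ('a, 'p) sequent \<Rightarrow> bool" where
  "\<lbrakk> \<Gamma> \<noteq> {#};
     \<forall>x\<in>#\<Sigma>. is_atom_or_bot x \<or> (\<exists>H \<gamma>. x = D H \<gamma> \<and> H \<noteq> {a});
     \<forall>x\<in>#\<Omega>. is_atom_or_bot x \<or> is_boxed x \<rbrakk>
   \<Longrightarrow> dd_rule [(\<Gamma>, {#})] (\<Sigma> + image_mset (D {a}) \<Gamma>, \<Omega>)"

inductive dt_rule :: "('a, 'p) sequent list \<Rightarrow> ('a, 'p) sequent \<Rightarrow> bool" where
  "dt_rule [(add_mset (D G A) (add_mset A \<Gamma>), \<Delta>)] (add_mset (D G A) \<Gamma>, \<Delta>)"

fun rule :: "calculus \<Rightarrow> ('a, 'p) sequent list \<Rightarrow> ('a, 'p) sequent \<Rightarrow> bool" where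
  "rule GK ps c = (prop_rule ps c \<or> dk_rule ps c)"
| "rule GKD ps c = (prop_rule ps c \<or> dk_rule ps c \<or> dd_rule ps c)"
| "rule GKT ps c = (prop_rule ps c \<or> dk_rule ps c \<or> dt_rule ps c)"

(* hderiv L n s: s has a derivation in calculus L of height (exactly) n,
   height = maximal number of rule applications along a branch *)
inductive hderiv :: "calculus \<Rightarrow> nat \<Rightarrow> ('a, 'p) sequent \<Rightarrow> bool" for L where
  hd_init: "initial s \<Longrightarrow> hderiv L 0 s"
| hd_rule: "\<lbrakk> rule L ps c; length hs = length ps;
              \<forall>i < length ps. hderiv L (hs ! i) (ps ! i) \<rbrakk>
            \<Longrightarrow> hderiv L (Suc (fold max hs 0)) c"

end

theory Submission
  imports Defs
begin

definition addp :: "bool \<Rightarrow> ('a, 'p) fm \<Rightarrow> ('a, 'p) sequent \<Rightarrow> ('a, 'p) sequent" where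
  "addp s X S = (if s then (add_mset X (fst S), snd S) else (fst S, add_mset X (snd S)))"

fun pcs :: "bool \<Rightarrow> ('a, 'p) fm \<Rightarrow> (('a, 'p) fm multiset \<times> ('a, 'p) fm multiset) list" where
  "pcs True (And A B) = [({#A, B#}, {#})]"
| "pcs False (And A B) = [({#}, {#A#}), ({#}, {#B#})]"
| "pcs True (Or A B) = [({#A#}, {#}), ({#B#}, {#})]"
| "pcs False (Or A B) = [({#}, {#A, B#})]"
| "pcs True (Imp A B) = [({#}, {#A#}), ({#B#}, {#})]"
| "pcs False (Imp A B) = [({#A#}, {#B#})]"
| "pcs True (Neg A) = [({#}, {#A#})]"
| "pcs False (Neg A) = [({#A#}, {#})]"
| "pcs _ _ = []"

definition prem :: "('a, 'p) fm multiset \<Rightarrow> ('a, 'p) fm multiset \<Rightarrow> (('a, 'p) fm multiset \<times> ('a, 'p) fm multiset) \<Rightarrow> ('a, 'p) sequent" where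
  "prem G Dl lr = (G + fst lr, Dl + snd lr)"

lemma pcs_nonempty: "pcs s X \<noteq> [] \<Longrightarrow> \<not> is_atom_or_bot X \<and> \<not> is_boxed X"
  by (cases s; cases X; auto)

lemma prop_rule_char:
  assumes "prop_rule ps c"
  shows "\<exists>s X G Dl. c = addp s X (G, Dl) \<and> ps = map (prem G Dl) (pcs s X) \<and> pcs s X \<noteq> []"
  using assms
proof cases
  case (RAnd \<Gamma> A \<Delta> B) then show ?thesis
    by (intro exI[of _ False] exI[of _ "And A B"] exI[of _ \<Gamma>] exI[of _ \<Delta>]) (simp add: addp_def prem_def)
next
  case (LAnd A B \<Gamma> \<Delta>) then show ?thesis
    by (intro exI[of _ True] exI[of _ "And A B"] exI[of _ \<Gamma>] exI[of _ \<Delta>]) (simp add: addp_def prem_def)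
next
  case (ROr \<Gamma> A B \<Delta>) then show ?thesis
    by (intro exI[of _ False] exI[of _ "Or A B"] exI[of _ \<Gamma>] exI[of _ \<Delta>]) (simp add: addp_def prem_def)
next
  case (LOr A \<Gamma> \<Delta> B) then show ?thesis
    by (intro exI[of _ True] exI[of _ "Or A B"] exI[of _ \<Gamma>] exI[of _ \<Delta>]) (simp add: addp_def prem_def)
next
  case (RImp A \<Gamma> B \<Delta>) then show ?thesis
    by (intro exI[of _ False] exI[of _ "Imp A B"] exI[of _ \<Gamma>] exI[of _ \<Delta>]) (simp add: addp_def prem_def)
next
  case (LImp \<Gamma> A \<Delta> B) then show ?thesis
    by (intro exI[of _ True] exI[of _ "Imp A B"] exI[of _ \<Gamma>] exI[of _ \<Delta>]) (simp add: addp_def prem_def)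
next
  case (RNeg A \<Gamma> \<Delta>) then show ?thesis
    by (intro exI[of _ False] exI[of _ "Neg A"] exI[of _ \<Gamma>] exI[of _ \<Delta>]) (simp add: addp_def prem_def)
next
  case (LNeg \<Gamma> A \<Delta>) then show ?thesis
    by (intro exI[of _ True] exI[of _ "Neg A"] exI[of _ \<Gamma>] exI[of _ \<Delta>]) (simp add: addp_def prem_def)
qed

lemma prop_rule_intro:
  assumes "pcs s X \<noteq> []"
  shows "prop_rule (map (prem G Dl) (pcs s X)) (addp s X (G, Dl))"
  using assms
  apply (cases s; cases X)
  apply (simp_all add: addp_def prem_def)
  apply (auto intro: prop_rule.intros)
  done

lemma initial_char: "initial S \<longleftrightarrow> (\<exists>p. Prop p \<in># fst S \<and> Prop p \<in># snd S) \<or> Bot \<in># fst S"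
proof
  assume "initial S" then show "(\<exists>p. Prop p \<in># fst S \<and> Prop p \<in># snd S) \<or> Bot \<in># fst S"
    by cases auto
next
  assume "(\<exists>p. Prop p \<in># fst S \<and> Prop p \<in># snd S) \<or> Bot \<in># fst S"
  then show "initial S"
  proof
    assume "\<exists>p. Prop p \<in># fst S \<and> Prop p \<in># snd S"
    then obtain p where "Prop p \<in># fst S" "Prop p \<in># snd S" by blast
    then obtain G Dl where "fst S = add_mset (Prop p) G" "snd S = add_mset (Prop p) Dl"
      by (metis mset_add)
    then show ?thesis by (metis init_p prod.collapse)
  next
    assume "Bot \<in># fst S"
    then obtain G where "fst S = add_mset Bot G" by (metis mset_add)
    then show ?thesis by (metis init_bot prod.collapse)
  qed
qed

lemma fold_max_le: "fold max xs a \<le> (b::nat) \<longleftrightarrow> a \<le> b \<and> (\<forall>x\<in>set xs. x \<le> b)"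
  by (induction xs arbitrary: a) auto

lemma fold_max_ge: "i < length xs \<Longrightarrow> xs ! i \<le> fold max xs (0::nat)"
  using fold_max_le[of xs 0 "fold max xs 0"] by auto

lemma reapply:
  assumes "rule L ps c" "length hs = length ps"
    and "\<forall>j<length ps. \<exists>m\<le>hs ! j. hderiv L m (ps ! j)"
  shows "\<exists>m\<le>Suc (fold max hs 0). hderiv L m c"
proof -
  define ms where "ms = map (\<lambda>j. SOME m. m \<le> hs ! j \<and> hderiv L m (ps ! j)) [0..<length ps]"
  have ms: "\<forall>j<length ps. ms ! j \<le> hs ! j \<and> hderiv L (ms ! j) (ps ! j)"
  proof (intro allI impI)
    fix j assume j: "j < length ps"
    then have "\<exists>m. m \<le> hs ! j \<and> hderiv L m (ps ! j)" using assms(3) by blast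
    then have "(SOME m. m \<le> hs ! j \<and> hderiv L m (ps ! j)) \<le> hs ! j \<and>
       hderiv L (SOME m. m \<le> hs ! j \<and> hderiv L m (ps ! j)) (ps ! j)" by (rule someI_ex)
    then show "ms ! j \<le> hs ! j \<and> hderiv L (ms ! j) (ps ! j)" using j by (simp add: ms_def)
  qed
  have len: "length ms = length ps" unfolding ms_def by simp
  have "hderiv L (Suc (fold max ms 0)) c"
    using hd_rule[OF assms(1) len] ms by blast
  moreover have "fold max ms 0 \<le> fold max hs 0"
    unfolding fold_max_le
  proof (intro conjI ballI)
    fix x assume "x \<in> set ms"
    then obtain j where j: "j < length ms" "x = ms ! j" by (metis in_set_conv_nth)
    then show "x \<le> fold max hs 0"
      using ms len assms(2) fold_max_ge[of j hs] by fastforce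
  qed simp
  ultimately show ?thesis by auto
qed

lemma addp_split:
  assumes "addp s X (G, Dl) = addp s' Y (G', Dl')" "\<not> (s = s' \<and> X = Y)"
  shows "\<exists>G0 Dl0. (G', Dl') = addp s X (G0, Dl0) \<and> (G, Dl) = addp s' Y (G0, Dl0)"
proof (cases s; cases s')
  assume "s" "s'"
  then have "add_mset X G = add_mset Y G'" "Dl = Dl'" "X \<noteq> Y" using assms by (auto simp: addp_def)
  then obtain G0 where "G = add_mset Y G0" "G' = add_mset X G0"
    by (metis add_eq_conv_ex)
  then show ?thesis using \<open>s\<close> \<open>s'\<close> \<open>Dl = Dl'\<close> by (auto simp: addp_def)
next
  assume "\<not>s" "\<not>s'"
  then have "add_mset X Dl = add_mset Y Dl'" "G = G'" "X \<noteq> Y" using assms by (auto simp: addp_def)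
  then obtain Dl0 where "Dl = add_mset Y Dl0" "Dl' = add_mset X Dl0"
    by (metis add_eq_conv_ex)
  then show ?thesis using \<open>\<not>s\<close> \<open>\<not>s'\<close> \<open>G = G'\<close> by (auto simp: addp_def)
next
  assume "s" "\<not>s'"
  then show ?thesis using assms by (auto simp: addp_def)
next
  assume "\<not>s" "s'"
  then show ?thesis using assms by (auto simp: addp_def)
qed

lemma mem_map2_D: "x \<in> set (map2 D Gs As) \<Longrightarrow> is_boxed x"
  by (auto simp: set_zip)

lemma main:
  assumes "hderiv L n S"
  shows "\<forall>s X G Dl l r. S = addp s X (G, Dl) \<longrightarrow> (l, r) \<in> set (pcs s X)
           \<longrightarrow> (\<exists>m\<le>n. hderiv L m (G + l, Dl + r))"
  using assms
proof (induction rule: hderiv.induct)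
  case (hd_init S)
  show ?case
  proof (intro allI impI)
    fix s X G Dl l r
    assume S: "S = addp s X (G, Dl)" and lr: "(l, r) \<in> set (pcs s X)"
    then have X: "\<not> is_atom_or_bot X" using pcs_nonempty[of s X] by (metis empty_iff empty_set)
    have "initial (G + l, Dl + r)"
      using hd_init X S unfolding initial_char
      by (cases s; cases X; auto simp: addp_def)
    then show "\<exists>m\<le>0. hderiv L m (G + l, Dl + r)" by (auto intro: hderiv.hd_init)
  qed
next
  case (hd_rule ps c hs)
  show ?case
  proof (intro allI impI)
    fix s X G Dl l r
    assume c: "c = addp s X (G, Dl)" and lr: "(l, r) \<in> set (pcs s X)"
    then have X: "\<not> is_atom_or_bot X" "\<not> is_boxed X" using pcs_nonempty[of s X] by (metis empty_iff empty_set)+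
    have rl: "prop_rule ps c \<or> dk_rule ps c \<or> dd_rule ps c \<or> (dt_rule ps c \<and> L = GKT)"
      using hd_rule(1) by (cases L) auto
    show "\<exists>m\<le>Suc (fold max hs 0). hderiv L m (G + l, Dl + r)"
    proof -
      { assume "prop_rule ps c"
        then obtain s' Y G' Dl' where c': "c = addp s' Y (G', Dl')"
          and ps: "ps = map (prem G' Dl') (pcs s' Y)" and ne: "pcs s' Y \<noteq> []"
          using prop_rule_char by blast
        have ?thesis
        proof (cases "s = s' \<and> X = Y")
          case True
          then have "G = G'" "Dl = Dl'" using c c' by (auto simp: addp_def split: if_splits)
          obtain i where i: "i < length (pcs s X)" "pcs s X ! i = (l, r)"
            using lr by (metis in_set_conv_nth)
          have "ps ! i = (G + l, Dl + r)" using ps i True \<open>G = G'\<close> \<open>Dl = Dl'\<close> by (simp add: prem_def)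
          moreover have "i < length ps" using ps i True by simp
          ultimately have "hderiv L (hs ! i) (G + l, Dl + r)" using hd_rule(3) by auto
          moreover have "hs ! i \<le> fold max hs 0" using fold_max_ge \<open>i < length ps\<close> hd_rule(2) by auto
          ultimately show ?thesis using le_SucI by blast
        next
          case False
          then obtain G0 Dl0 where e1: "(G', Dl') = addp s X (G0, Dl0)" and e2: "(G, Dl) = addp s' Y (G0, Dl0)"
            using addp_split c c' by metis
          let ?ps = "map (prem (G0 + l) (Dl0 + r)) (pcs s' Y)"
          have "rule L ?ps (addp s' Y (G0 + l, Dl0 + r))"
            using prop_rule_intro[OF ne] by (cases L) auto
          moreover have "addp s' Y (G0 + l, Dl0 + r) = (G + l, Dl + r)"
            using e2 by (cases s') (auto simp: addp_def)
          moreover have "\<forall>j<length ?ps. \<exists>m\<le>hs ! j. hderiv L m (?ps ! j)"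
          proof (intro allI impI)
            fix j assume j: "j < length ?ps"
            obtain lj rj where ljrj: "pcs s' Y ! j = (lj, rj)" by fastforce
            have "ps ! j = addp s X (G0 + lj, Dl0 + rj)"
              using ps j ljrj e1 by (cases s) (auto simp: addp_def prem_def)
            moreover have "j < length ps" using ps j by simp
            ultimately have "\<exists>m\<le>hs ! j. hderiv L m (G0 + lj + l, Dl0 + rj + r)"
              using hd_rule(3) lr by blast
            moreover have "?ps ! j = (G0 + lj + l, Dl0 + rj + r)"
              using j ljrj by (simp add: prem_def add_ac)
            ultimately show "\<exists>m\<le>hs ! j. hderiv L m (?ps ! j)" by simp
          qed
          moreover have "length hs = length ?ps" using hd_rule(2) ps by simp
          ultimately show ?thesis using reapply by metis
        qed }
      moreover
      { assume "dk_rule ps c"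
        then have False
        proof cases
          case (1 Gs As G' \<Sigma> \<Omega> \<beta>)
          have m: "X \<in># \<Sigma> + mset (map2 D Gs As) \<or> X \<in># add_mset (D G' \<beta>) \<Omega>"
            using c 1 by (cases s) (auto simp: addp_def)
          then have m2: "X \<in># \<Sigma> \<or> X \<in># mset (map2 D Gs As) \<or> X \<in># add_mset (D G' \<beta>) \<Omega>"
            by (metis union_iff)
          moreover { assume "X \<in># \<Sigma>" then have False using 1 X by auto }
          moreover { assume "X \<in># mset (map2 D Gs As)"
            then have "X \<in> set (map2 D Gs As)" by (simp only: set_mset_mset)
            then have False using mem_map2_D X by blast }
          moreover { assume "X \<in># add_mset (D G' \<beta>) \<Omega>" then have False using 1 X by auto }
          ultimately show False by blast
        qed }
      moreover
      { assume "dd_rule ps c"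
        then have False
        proof cases
          case (1 \<Gamma> \<Sigma> a \<Omega>)
          have m: "X \<in># \<Sigma> + image_mset (D {a}) \<Gamma> \<or> X \<in># \<Omega>"
            using c 1 by (cases s) (auto simp: addp_def)
          then have m2: "X \<in># \<Sigma> \<or> X \<in># image_mset (D {a}) \<Gamma> \<or> X \<in># \<Omega>"
            by (metis union_iff)
          moreover { assume "X \<in># \<Sigma>" then have False using 1 X by auto }
          moreover { assume "X \<in># image_mset (D {a}) \<Gamma>"
            then have False using X by auto }
          moreover { assume "X \<in># \<Omega>" then have False using 1 X by auto }
          ultimately show False by blast
        qed }
      moreover
      { assume dt: "dt_rule ps c" and LT: "L = GKT"
        from dt have ?thesis
        proof cases
          case (1 Ga A \<Gamma> \<Delta>)
          have "c = addp True (D Ga A) (\<Gamma>, \<Delta>)" using 1 by (simp add: addp_def)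
          then obtain G0 Dl0 where e1: "(\<Gamma>, \<Delta>) = addp s X (G0, Dl0)"
              and e2: "(G, Dl) = addp True (D Ga A) (G0, Dl0)"
            using addp_split c X by (metis is_boxed.simps(1))
          let ?ps = "[(add_mset (D Ga A) (add_mset A (G0 + l)), Dl0 + r)]"
          have R: "rule L ?ps (add_mset (D Ga A) (G0 + l), Dl0 + r)"
            using dt_rule.intros LT by auto
          have EQ: "(add_mset (D Ga A) (G0 + l), Dl0 + r) = (G + l, Dl + r)"
            using e2 by (auto simp: addp_def)
          have H0: "\<exists>m\<le>hs ! 0. hderiv L m (?ps ! 0)"
          proof -
            have "ps ! 0 = addp s X (add_mset (D Ga A) (add_mset A G0), Dl0)"
              using 1 e1 by (cases s) (auto simp: addp_def add_mset_commute)
            then have "\<exists>m\<le>hs ! 0. hderiv L m (add_mset (D Ga A) (add_mset A G0) + l, Dl0 + r)"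
            proof -
              have h0: "0 < length ps" using 1 by simp
              have "\<forall>sa Xa G Dl. ps ! 0 = addp sa Xa (G, Dl) \<longrightarrow> (\<forall>l r. (l, r) \<in> set (pcs sa Xa)
                  \<longrightarrow> (\<exists>m\<le>hs ! 0. hderiv L m (G + l, Dl + r)))"
                using hd_rule(3) h0 by blast
              then show ?thesis using \<open>ps ! 0 = addp s X (add_mset (D Ga A) (add_mset A G0), Dl0)\<close> lr by blast
            qed
            then show ?thesis by simp
          qed
          have LEN: "length hs = length ?ps" using hd_rule(2) 1 by simp
          have ALL: "\<forall>j<length ?ps. \<exists>m\<le>hs ! j. hderiv L m (?ps ! j)"
            using H0 by simp
          show ?thesis using reapply[OF R LEN ALL] EQ by simp
        qed }
      ultimately show ?thesis using rl by blast
    qed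
  qed
qed

theorem proposition3p9:
  fixes L :: calculus
    and ps :: "('a::finite, 'p::countable) sequent list"
    and c :: "('a, 'p) sequent"
  assumes "prop_rule ps c"
    and "wf_seq c"
    and "hderiv L n c"
  shows "\<forall>p \<in> set ps. \<exists>m \<le> n. hderiv L m p"
proof
  fix p assume p: "p \<in> set ps"
  obtain s X G Dl where c: "c = addp s X (G, Dl)" and ps: "ps = map (prem G Dl) (pcs s X)"
    using prop_rule_char[OF assms(1)] by blast
  obtain l r where lr: "(l, r) \<in> set (pcs s X)" "p = (G + l, Dl + r)"
    using p ps by (auto simp: prem_def)
  show "\<exists>m \<le> n. hderiv L m p" using main[OF assms(3)] c lr by blast
qed

end
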